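(* Suppose $\rho^w$ is one-step coherently decomposable and satisfies the bounded conditional market risk assumption. Then, for an American option (with or without the buyer's commitment to an exercise strategy), it is optimal for the writer to terminate the hedging strategy at the exact moment the option is exercised, i.e. there is a minimal-risk hedging policy with $\hat\xi^{i}_k=0$ for all $i\le k$, so that the position $\xi_k\mathbf{1}\{\tau>k\}+\sum_{i=0}^k\hat\xi^i_k\mathbf{1}\{\tau=i\}$ is zero whenever $\tau\le k$. The same applies to the buyer when $\rho^b$ is one-step coherently decomposable and satisfies the bounded conditional market risk assumption.
   Context: Discrete-time setting: filtered probability space $(\Omega,\mathcal{F},(\mathcal{F}_t),\mathbb{P})$, zero interest rate, risky asset with $S_k:=S_{t_k}$ at trading dates $t_0<\dots<t_{K-1}<t_K=T$, $\Delta S_{k+1}=S_{k+1}-S_k$, adapted auxiliary process $Y_k$; variables in $\mathcal{L}_p$ for some $p\in[1,\infty]$. Exercise times are stopping times $\tau:\Omega\to\{0,\dots,K\}$; payoff $F(S_\tau,Y_\tau)=\sum_k\mathbf{1}\{\tau=k\}F(S_k,Y_k)$. Self-financing strategies: $X^\tau_0=p_0$, $X^\tau_{k+1}=X^\tau_k+(\xi_k\mathbf{1}\{\tau>k\}+\sum_{i=0}^k\hat\xi^i_k\mathbf{1}\{\tau=i\})\Delta S_{k+1}$ with $\xi_k,\hat\xi^i_k$ $\mathcal{F}_{t_k}$-measurable ($\hat\xi^i_k$ is the position held at $k$ after exercise at $i$). The writer minimizes $\rho^w(F(S_\tau,Y_\tau)-X^\tau_K)$ over strategies (for a committed $\tau$,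 or against the worst $\tau$ without commitment); the buyer minimizes $\rho^b(-F(S_\tau,Y_\tau)-X^\tau_K)$ over strategies and $\tau$. A conditional risk mapping $\rho_k:\mathcal{L}_p(\Omega,\mathcal{F}_{t_{k+1}},\mathbb{P})\to\mathcal{L}_p(\Omega,\mathcal{F}_{t_k},\mathbb{P})$ is conditionally convex, monotone and translation invariant; $\rho$ is one-step coherently decomposable if $\rho=\rho_0\circ\cdots\circ\rho_{K-1}$ for such mappings which are moreover conditionally scale invariant ($\rho_k(\alpha X)=\alpha\rho_k(X)$ for $\alpha\ge0$). Bounded conditional market risk: with $\rho_{k,K}:=\rho_k\circ\cdots\circ\rho_{K-1}$, for each $k$, $0\ge\inf_{\xi_k,\dots,\xi_{K-1}}\rho_{k,K}(-\sum_{\ell=k}^{K-1}\xi_\ell\Delta S_{\ell+1})>-\infty$ a.s. (and $=0$ when conditionally scale invariant). *)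

theory Defs
  imports "HOL-Probability.Probability"
begin

text \<open>Random variables are real functions; equalities/inequalities between elements of L_p
  are understood almost surely.\<close>
definition Lp_mem :: "'a measure \<Rightarrow> 'a measure \<Rightarrow> ennreal \<Rightarrow> ('a \<Rightarrow> real) \<Rightarrow> bool" where
  "Lp_mem M G p f \<longleftrightarrow> f \<in> borel_measurable G \<and>
     (if p = \<top> then (\<exists>C. AE x in M. \<bar>f x\<bar> \<le> C)
      else integrable M (\<lambda>x. \<bar>f x\<bar> powr enn2real p))"

text \<open>Conditional risk mapping rho_k : L_p(F_{k+1}) -> L_p(F_k) (loss convention:
  larger values = more risk), conditionally convex, monotone, translation invariant.\<close>
definition cond_risk_mapping ::
  "'a measure \<Rightarrow> (nat \<Rightarrow> 'a measure) \<Rightarrow> ennreal \<Rightarrow> nat \<Rightarrow> (('a \<Rightarrow> real) \<Rightarrow> ('a \<Rightarrow> real)) \<Rightarrow> bool" where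
  "cond_risk_mapping M F p k \<rho> \<longleftrightarrow>
     (\<forall>X. Lp_mem M (F (Suc k)) p X \<longrightarrow> Lp_mem M (F k) p (\<rho> X)) \<and>
     (\<forall>X Y. Lp_mem M (F (Suc k)) p X \<longrightarrow> Lp_mem M (F (Suc k)) p Y \<longrightarrow>
        (AE \<omega> in M. X \<omega> = Y \<omega>) \<longrightarrow> (AE \<omega> in M. \<rho> X \<omega> = \<rho> Y \<omega>)) \<and>
     (\<forall>X Y. Lp_mem M (F (Suc k)) p X \<longrightarrow> Lp_mem M (F (Suc k)) p Y \<longrightarrow>
        (AE \<omega> in M. X \<omega> \<le> Y \<omega>) \<longrightarrow> (AE \<omega> in M. \<rho> X \<omega> \<le> \<rho> Y \<omega>)) \<and>
     (\<forall>X m. Lp_mem M (F (Suc k)) p X \<longrightarrow> Lp_mem M (F k) p m \<longrightarrow>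
        (AE \<omega> in M. \<rho> (\<lambda>x. X x + m x) \<omega> = \<rho> X \<omega> + m \<omega>)) \<and>
     (\<forall>X Y c. Lp_mem M (F (Suc k)) p X \<longrightarrow> Lp_mem M (F (Suc k)) p Y \<longrightarrow>
        c \<in> borel_measurable (F k) \<longrightarrow> (\<forall>\<omega>\<in>space M. 0 \<le> c \<omega> \<and> c \<omega> \<le> 1) \<longrightarrow>
        (AE \<omega> in M. \<rho> (\<lambda>x. c x * X x + (1 - c x) * Y x) \<omega>
                      \<le> c \<omega> * \<rho> X \<omega> + (1 - c \<omega>) * \<rho> Y \<omega>))"

definition coherent_cond_risk_mapping ::
  "'a measure \<Rightarrow> (nat \<Rightarrow> 'a measure) \<Rightarrow> ennreal \<Rightarrow> nat \<Rightarrow> (('a \<Rightarrow> real) \<Rightarrow> ('a \<Rightarrow> real)) \<Rightarrow> bool" where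
  "coherent_cond_risk_mapping M F p k \<rho> \<longleftrightarrow> cond_risk_mapping M F p k \<rho> \<and>
     (\<forall>X \<alpha>. Lp_mem M (F (Suc k)) p X \<longrightarrow> \<alpha> \<in> borel_measurable (F k) \<longrightarrow>
        (\<forall>\<omega>\<in>space M. 0 \<le> \<alpha> \<omega>) \<longrightarrow> Lp_mem M (F (Suc k)) p (\<lambda>x. \<alpha> x * X x) \<longrightarrow>
        (AE \<omega> in M. \<rho> (\<lambda>x. \<alpha> x * X x) \<omega> = \<alpha> \<omega> * \<rho> X \<omega>))"

definition rho_from :: "(nat \<Rightarrow> ('a \<Rightarrow> real) \<Rightarrow> ('a \<Rightarrow> real)) \<Rightarrow> nat \<Rightarrow> nat \<Rightarrow> ('a \<Rightarrow> real) \<Rightarrow> ('a \<Rightarrow> real)" where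
  "rho_from R k K = foldr (\<lambda>j g. R j \<circ> g) [k..<K] id"

definition one_step_coherent_decomposition ::
  "'a measure \<Rightarrow> (nat \<Rightarrow> 'a measure) \<Rightarrow> ennreal \<Rightarrow> nat \<Rightarrow> (('a \<Rightarrow> real) \<Rightarrow> ('a \<Rightarrow> real))
     \<Rightarrow> (nat \<Rightarrow> ('a \<Rightarrow> real) \<Rightarrow> ('a \<Rightarrow> real)) \<Rightarrow> bool" where
  "one_step_coherent_decomposition M F p K \<rho> R \<longleftrightarrow>
     (\<forall>k<K. coherent_cond_risk_mapping M F p k (R k)) \<and>
     (\<forall>X. Lp_mem M (F K) p X \<longrightarrow> \<rho> X = rho_from R 0 K X)"

definition is_ess_inf :: "'a measure \<Rightarrow> 'a measure \<Rightarrow> ('a \<Rightarrow> real) set \<Rightarrow> ('a \<Rightarrow> ereal) \<Rightarrow> bool" where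
  "is_ess_inf M G A Z \<longleftrightarrow> Z \<in> borel_measurable G \<and>
     (\<forall>f\<in>A. AE x in M. Z x \<le> ereal (f x)) \<and>
     (\<forall>g \<in> borel_measurable G. (\<forall>f\<in>A. AE x in M. g x \<le> ereal (f x)) \<longrightarrow> (AE x in M. g x \<le> Z x))"

definition admissible_pos ::
  "'a measure \<Rightarrow> (nat \<Rightarrow> 'a measure) \<Rightarrow> (nat \<Rightarrow> 'a \<Rightarrow> real) \<Rightarrow> ennreal \<Rightarrow> (nat \<Rightarrow> 'a \<Rightarrow> real) \<Rightarrow> bool" where
  "admissible_pos M F S p \<xi> \<longleftrightarrow>
     (\<forall>l. \<xi> l \<in> borel_measurable (F l) \<and>
          Lp_mem M (F (Suc l)) p (\<lambda>\<omega>. \<xi> l \<omega> * (S (Suc l) \<omega> - S l \<omega>)))"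

definition bounded_cond_market_risk ::
  "'a measure \<Rightarrow> (nat \<Rightarrow> 'a measure) \<Rightarrow> (nat \<Rightarrow> 'a \<Rightarrow> real) \<Rightarrow> nat \<Rightarrow> ennreal
     \<Rightarrow> (nat \<Rightarrow> ('a \<Rightarrow> real) \<Rightarrow> ('a \<Rightarrow> real)) \<Rightarrow> bool" where
  "bounded_cond_market_risk M F S K p R \<longleftrightarrow>
     (\<forall>k<K. \<exists>Z. is_ess_inf M (F k)
        {rho_from R k K (\<lambda>\<omega>. - (\<Sum>l\<in>{k..<K}. \<xi> l \<omega> * (S (Suc l) \<omega> - S l \<omega>))) | \<xi>.
           admissible_pos M F S p \<xi>} Z \<and>
        (AE \<omega> in M. Z \<omega> \<le> 0 \<and> - \<infinity> < Z \<omega>))"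

definition stopping_time_upto :: "'a measure \<Rightarrow> (nat \<Rightarrow> 'a measure) \<Rightarrow> nat \<Rightarrow> ('a \<Rightarrow> nat) \<Rightarrow> bool" where
  "stopping_time_upto M F K \<tau> \<longleftrightarrow> (\<forall>\<omega>\<in>space M. \<tau> \<omega> \<le> K) \<and>
     (\<forall>k\<le>K. {\<omega>\<in>space M. \<tau> \<omega> = k} \<in> sets (F k))"

text \<open>Terminal wealth X^tau_K of the self-financing strategy (p0, xi, xih), where
  xih i k is the position held at k after exercise at i.\<close>
definition wealth :: "(nat \<Rightarrow> 'a \<Rightarrow> real) \<Rightarrow> nat \<Rightarrow> real \<Rightarrow> (nat \<Rightarrow> 'a \<Rightarrow> real)
     \<Rightarrow> (nat \<Rightarrow> nat \<Rightarrow> 'a \<Rightarrow> real) \<Rightarrow> ('a \<Rightarrow> nat) \<Rightarrow> 'a \<Rightarrow> real" where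
  "wealth S K p0 \<xi> \<xi>h \<tau> \<omega> = p0 + (\<Sum>k<K.
      (\<xi> k \<omega> * (if k < \<tau> \<omega> then 1 else 0) + (\<Sum>i\<le>k. \<xi>h i k \<omega> * (if \<tau> \<omega> = i then 1 else 0)))
      * (S (Suc k) \<omega> - S k \<omega>))"

end

theory Submission imports Defs begin

lemma Lp_cong:
  assumes "subalgebra M G" "Lp_mem M G p f" "\<And>x. x \<in> space M \<Longrightarrow> f x = g x"
  shows "Lp_mem M G p g"
proof -
  have sp: "space G = space M" using assms(1) by (simp add: subalgebra_def)
  have m: "g \<in> borel_measurable G"
    using assms(2) by (subst measurable_cong[where f=g and g=f]) (auto simp: sp assms(3) Lp_mem_def)
  show ?thesis
  proof (cases "p = \<top>")
    case True
    then obtain C where "AE x in M. \<bar>f x\<bar> \<le> C" using assms(2) by (auto simp: Lp_mem_def)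
    then have "AE x in M. \<bar>g x\<bar> \<le> C" by (rule AE_mp) (auto intro!: AE_I2 simp: assms(3))
    then show ?thesis using True m by (auto simp: Lp_mem_def)
  next
    case False
    then have "integrable M (\<lambda>x. \<bar>f x\<bar> powr enn2real p)" using assms(2) by (auto simp: Lp_mem_def)
    then have "integrable M (\<lambda>x. \<bar>g x\<bar> powr enn2real p)"
      using Bochner_Integration.integrable_cong[of M M "\<lambda>x. \<bar>f x\<bar> powr enn2real p" "\<lambda>x. \<bar>g x\<bar> powr enn2real p"]
      by (simp add: assms(3))
    then show ?thesis using False m by (auto simp: Lp_mem_def)
  qed
qed

lemma Lp_meas: "Lp_mem M G p f \<Longrightarrow> f \<in> borel_measurable G"
  by (simp add: Lp_mem_def)

lemma Lp_up:
  assumes "subalgebra M G" "subalgebra M G'" "sets G \<subseteq> sets G'" "Lp_mem M G p f"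
  shows "Lp_mem M G' p f"
proof -
  have "subalgebra G' G" using assms by (auto simp: subalgebra_def)
  then have "f \<in> borel_measurable G'" using assms(4) measurable_from_subalg Lp_meas by blast
  then show ?thesis using assms(4) by (simp add: Lp_mem_def)
qed

lemma Lp_const:
  assumes "prob_space M" "subalgebra M G"
  shows "Lp_mem M G p (\<lambda>x. c)"
proof -
  interpret prob_space M by fact
  show ?thesis by (auto simp: Lp_mem_def)
qed

lemma powr_add_bound:
  fixes a b q :: real assumes "0 \<le> q"
  shows "\<bar>a + b\<bar> powr q \<le> 2 powr q * (\<bar>a\<bar> powr q + \<bar>b\<bar> powr q)"
proof -
  have "\<bar>a + b\<bar> powr q \<le> (2 * max \<bar>a\<bar> \<bar>b\<bar>) powr q"
    by (rule powr_mono2) (use assms in auto)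
  also have "\<dots> = 2 powr q * max \<bar>a\<bar> \<bar>b\<bar> powr q" by (simp add: powr_mult)
  also have "max \<bar>a\<bar> \<bar>b\<bar> powr q \<le> \<bar>a\<bar> powr q + \<bar>b\<bar> powr q"
    by (cases "\<bar>a\<bar> \<le> \<bar>b\<bar>") (auto simp: max_def)
  then have "2 powr q * max \<bar>a\<bar> \<bar>b\<bar> powr q \<le> 2 powr q * (\<bar>a\<bar> powr q + \<bar>b\<bar> powr q)"
    by (simp add: mult_left_mono)
  finally show ?thesis .
qed

lemma Lp_add:
  assumes "subalgebra M G" "Lp_mem M G p f" "Lp_mem M G p g"
  shows "Lp_mem M G p (\<lambda>x. f x + g x)"
proof -
  have mf: "f \<in> borel_measurable G" and mg: "g \<in> borel_measurable G" using assms by (auto simp: Lp_mem_def)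
  have m: "(\<lambda>x. f x + g x) \<in> borel_measurable G" using mf mg by measurable
  have mfM: "f \<in> borel_measurable M" and mgM: "g \<in> borel_measurable M"
    using measurable_from_subalg[OF assms(1)] mf mg by auto
  show ?thesis
  proof (cases "p = \<top>")
    case True
    then obtain C1 C2 where "AE x in M. \<bar>f x\<bar> \<le> C1" "AE x in M. \<bar>g x\<bar> \<le> C2"
      using assms by (auto simp: Lp_mem_def)
    then have "AE x in M. \<bar>f x + g x\<bar> \<le> C1 + C2" by eventually_elim auto
    then show ?thesis using True m by (auto simp: Lp_mem_def)
  next
    case False
    define q where "q = enn2real p"
    have q: "0 \<le> q" by (simp add: q_def)
    have i1: "integrable M (\<lambda>x. \<bar>f x\<bar> powr q)" "integrable M (\<lambda>x. \<bar>g x\<bar> powr q)"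
      using assms False by (auto simp: Lp_mem_def q_def)
    have "integrable M (\<lambda>x. 2 powr q * (\<bar>f x\<bar> powr q + \<bar>g x\<bar> powr q))"
      using i1 by auto
    moreover have "(\<lambda>x. \<bar>f x + g x\<bar> powr q) \<in> borel_measurable M" using mfM mgM by measurable
    ultimately have "integrable M (\<lambda>x. \<bar>f x + g x\<bar> powr q)"
      by (rule Bochner_Integration.integrable_bound) (use powr_add_bound[OF q] in \<open>auto intro!: AE_I2\<close>)
    then show ?thesis using False m by (auto simp: Lp_mem_def q_def)
  qed
qed

lemma Lp_bmul:
  assumes "subalgebra M G" "Lp_mem M G p f" "c \<in> borel_measurable G" "\<And>x. x \<in> space M \<Longrightarrow> \<bar>c x\<bar> \<le> B"
  shows "Lp_mem M G p (\<lambda>x. c x * f x)"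
proof -
  have mf: "f \<in> borel_measurable G" using assms by (auto simp: Lp_mem_def)
  have m: "(\<lambda>x. c x * f x) \<in> borel_measurable G" using mf assms(3) by measurable
  have mfM: "f \<in> borel_measurable M" and mcM: "c \<in> borel_measurable M"
    using measurable_from_subalg[OF assms(1)] mf assms(3) by auto
  show ?thesis
  proof (cases "p = \<top>")
    case True
    then obtain C where C: "AE x in M. \<bar>f x\<bar> \<le> C"
      using assms by (auto simp: Lp_mem_def)
    have "AE x in M. \<bar>c x * f x\<bar> \<le> \<bar>B\<bar> * \<bar>C\<bar>"
      using C
    proof (rule AE_mp, intro AE_I2 impI)
      fix x assume "x \<in> space M" "\<bar>f x\<bar> \<le> C"
      then show "\<bar>c x * f x\<bar> \<le> \<bar>B\<bar> * \<bar>C\<bar>" using assms(4)[of x]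
        by (simp add: abs_mult mult_mono')
    qed
    then show ?thesis using True m by (auto simp: Lp_mem_def)
  next
    case False
    define q where "q = enn2real p"
    have q: "0 \<le> q" by (simp add: q_def)
    have i1: "integrable M (\<lambda>x. \<bar>f x\<bar> powr q)"
      using assms False by (auto simp: Lp_mem_def q_def)
    have "integrable M (\<lambda>x. \<bar>B\<bar> powr q * \<bar>f x\<bar> powr q)"
      using i1 by auto
    moreover have "(\<lambda>x. \<bar>c x * f x\<bar> powr q) \<in> borel_measurable M" using mfM mcM by measurable
    moreover have "AE x in M. norm (\<bar>c x * f x\<bar> powr q) \<le> norm (\<bar>B\<bar> powr q * \<bar>f x\<bar> powr q)"
    proof (rule AE_I2)
      fix x assume x: "x \<in> space M"
      have "\<bar>c x * f x\<bar> powr q = \<bar>c x\<bar> powr q * \<bar>f x\<bar> powr q" by (simp add: abs_mult powr_mult)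
      also have "\<dots> \<le> \<bar>B\<bar> powr q * \<bar>f x\<bar> powr q"
        by (rule mult_right_mono, rule powr_mono2) (use q assms(4)[OF x] in auto)
      finally show "norm (\<bar>c x * f x\<bar> powr q) \<le> norm (\<bar>B\<bar> powr q * \<bar>f x\<bar> powr q)" by simp
    qed
    ultimately have "integrable M (\<lambda>x. \<bar>c x * f x\<bar> powr q)"
      by (rule Bochner_Integration.integrable_bound)
    then show ?thesis using False m by (auto simp: Lp_mem_def q_def)
  qed
qed

lemma Lp_uminus:
  assumes "subalgebra M G" "Lp_mem M G p f"
  shows "Lp_mem M G p (\<lambda>x. - f x)"
  using Lp_bmul[OF assms, of "\<lambda>x. -1" 1] by simp

lemma Lp_diff:
  assumes "subalgebra M G" "Lp_mem M G p f" "Lp_mem M G p g"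
  shows "Lp_mem M G p (\<lambda>x. f x - g x)"
  using Lp_add[OF assms(1,2) Lp_uminus[OF assms(1,3)]] by simp

lemma Lp_sum:
  assumes "prob_space M" "subalgebra M G" "\<And>i. i \<in> I \<Longrightarrow> Lp_mem M G p (f i)"
  shows "Lp_mem M G p (\<lambda>x. \<Sum>i\<in>I. f i x)"
  using assms(3)
proof (induction I rule: infinite_finite_induct)
  case (infinite A)
  then show ?case using Lp_const[OF assms(1,2)] by simp
next
  case empty
  then show ?case using Lp_const[OF assms(1,2)] by simp
next
  case (insert i A)
  then show ?case using Lp_add[OF assms(2), of p "f i" "\<lambda>x. \<Sum>i\<in>A. f i x"] by simp
qed


lemma rho_from_step: "k < K \<Longrightarrow> rho_from R k K X = R k (rho_from R (Suc k) K X)"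
  by (simp add: rho_from_def upt_conv_Cons)

lemma rho_from_id: "K \<le> k \<Longrightarrow> rho_from R k K X = X"
  by (simp add: rho_from_def)

locale rsetup =
  fixes M :: "'a measure" and F :: "nat \<Rightarrow> 'a measure" and p :: ennreal and K :: nat
    and R :: "nat \<Rightarrow> ('a \<Rightarrow> real) \<Rightarrow> ('a \<Rightarrow> real)"
  assumes P: "prob_space M" and sub: "\<And>k. subalgebra M (F k)"
    and filt: "\<And>k. sets (F k) \<subseteq> sets (F (Suc k))"
    and coh: "\<And>k. k < K \<Longrightarrow> coherent_cond_risk_mapping M F p k (R k)"
begin

abbreviation Lp where "Lp k f \<equiv> Lp_mem M (F k) p f"

lemma Fmono: "i \<le> k \<Longrightarrow> sets (F i) \<subseteq> sets (F k)"
  using lift_Suc_mono_le[of "\<lambda>k. sets (F k)", OF filt] by blast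

lemma space_F[simp]: "space (F k) = space M"
  using sub by (simp add: subalgebra_def)

lemma meas_up: "i \<le> k \<Longrightarrow> f \<in> borel_measurable (F i) \<Longrightarrow> f \<in> borel_measurable (F k)"
  using measurable_from_subalg[of "F k" "F i"] Fmono[of i k] by (auto simp: subalgebra_def)

lemma Lp_upk: "i \<le> k \<Longrightarrow> Lp i f \<Longrightarrow> Lp k f"
  using Lp_up[OF sub sub Fmono] by blast

lemma Lpc: "Lp k (\<lambda>x. c)" using Lp_const[OF P sub] .

lemma R_Lp: "k < K \<Longrightarrow> Lp (Suc k) X \<Longrightarrow> Lp k (R k X)"
  using coh by (auto simp: coherent_cond_risk_mapping_def cond_risk_mapping_def)

lemma R_cong: "k < K \<Longrightarrow> Lp (Suc k) X \<Longrightarrow> Lp (Suc k) Y \<Longrightarrow> AE \<omega> in M. X \<omega> = Y \<omega> \<Longrightarrow>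
   AE \<omega> in M. R k X \<omega> = R k Y \<omega>"
  using coh by (auto simp: coherent_cond_risk_mapping_def cond_risk_mapping_def)

lemma R_mono: "k < K \<Longrightarrow> Lp (Suc k) X \<Longrightarrow> Lp (Suc k) Y \<Longrightarrow> AE \<omega> in M. X \<omega> \<le> Y \<omega> \<Longrightarrow>
   AE \<omega> in M. R k X \<omega> \<le> R k Y \<omega>"
  using coh by (auto simp: coherent_cond_risk_mapping_def cond_risk_mapping_def)

lemma R_trans: "k < K \<Longrightarrow> Lp (Suc k) X \<Longrightarrow> Lp k m \<Longrightarrow>
   AE \<omega> in M. R k (\<lambda>x. X x + m x) \<omega> = R k X \<omega> + m \<omega>"
  using coh by (auto simp: coherent_cond_risk_mapping_def cond_risk_mapping_def)

lemma R_convex: "k < K \<Longrightarrow> Lp (Suc k) X \<Longrightarrow> Lp (Suc k) Y \<Longrightarrow> c \<in> borel_measurable (F k) \<Longrightarrow>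
   (\<forall>\<omega>\<in>space M. 0 \<le> c \<omega> \<and> c \<omega> \<le> 1) \<Longrightarrow>
   AE \<omega> in M. R k (\<lambda>x. c x * X x + (1 - c x) * Y x) \<omega> \<le> c \<omega> * R k X \<omega> + (1 - c \<omega>) * R k Y \<omega>"
  using coh by (auto simp: coherent_cond_risk_mapping_def cond_risk_mapping_def)

lemma R_scale: "k < K \<Longrightarrow> Lp (Suc k) X \<Longrightarrow> \<alpha> \<in> borel_measurable (F k) \<Longrightarrow>
   (\<forall>\<omega>\<in>space M. 0 \<le> \<alpha> \<omega>) \<Longrightarrow> Lp (Suc k) (\<lambda>x. \<alpha> x * X x) \<Longrightarrow>
   AE \<omega> in M. R k (\<lambda>x. \<alpha> x * X x) \<omega> = \<alpha> \<omega> * R k X \<omega>"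
  using coh by (auto simp: coherent_cond_risk_mapping_def)

lemma R_zero: "k < K \<Longrightarrow> AE \<omega> in M. R k (\<lambda>x. 0) \<omega> = 0"
  using R_scale[of k "\<lambda>x. 0" "\<lambda>x. 0"] Lpc by simp

lemma R_const: assumes "k < K" "Lp k C" shows "AE \<omega> in M. R k C \<omega> = C \<omega>"
proof -
  have "AE \<omega> in M. R k (\<lambda>x. 0 + C x) \<omega> = R k (\<lambda>x. 0) \<omega> + C \<omega>"
    by (rule R_trans[OF assms(1) Lpc assms(2)])
  with R_zero[OF assms(1)] show ?thesis by auto
qed

lemma ind_meas: "B \<in> sets (F k) \<Longrightarrow> (indicator B :: 'a \<Rightarrow> real) \<in> borel_measurable (F k)"
  by simp

lemma R_local_le:
  assumes k: "k < K" and B: "B \<in> sets (F k)" and X: "Lp (Suc k) X" and X': "Lp (Suc k) X'"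
    and eq: "AE \<omega> in M. \<omega> \<in> B \<longrightarrow> X \<omega> = X' \<omega>"
  shows "AE \<omega> in M. \<omega> \<in> B \<longrightarrow> R k X \<omega> \<le> R k X' \<omega>"
proof -
  define c :: "'a \<Rightarrow> real" where "c = indicator B"
  have cm: "c \<in> borel_measurable (F k)" using B by (simp add: c_def)
  have cm1: "c \<in> borel_measurable (F (Suc k))" using meas_up[OF _ cm] by simp
  have c01: "\<forall>\<omega>\<in>space M. 0 \<le> c \<omega> \<and> c \<omega> \<le> 1" by (simp add: c_def indicator_def)
  define Z where "Z = (\<lambda>x. c x * X' x + (1 - c x) * X x)"
  have cm1': "(\<lambda>x. 1 - c x) \<in> borel_measurable (F (Suc k))" using cm1 by measurable
  have LZ: "Lp (Suc k) Z" unfolding Z_def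
    by (intro Lp_add[OF sub] Lp_bmul[OF sub X' cm1, of 1] Lp_bmul[OF sub X cm1', of 1])
       (auto simp: c_def indicator_def)
  have "AE \<omega> in M. Z \<omega> = X \<omega>" using eq
    by (rule AE_mp) (auto intro!: AE_I2 simp: Z_def c_def indicator_def)
  then have "AE \<omega> in M. R k Z \<omega> = R k X \<omega>" by (intro R_cong[OF k LZ X])
  moreover have "AE \<omega> in M. R k Z \<omega> \<le> c \<omega> * R k X' \<omega> + (1 - c \<omega>) * R k X \<omega>"
    unfolding Z_def by (rule R_convex[OF k X' X cm c01])
  ultimately show ?thesis
    by eventually_elim (auto simp: c_def indicator_def)
qed

lemma R_local:
  assumes k: "k < K" and B: "B \<in> sets (F k)" and X: "Lp (Suc k) X" and X': "Lp (Suc k) X'"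
    and eq: "AE \<omega> in M. \<omega> \<in> B \<longrightarrow> X \<omega> = X' \<omega>"
  shows "AE \<omega> in M. \<omega> \<in> B \<longrightarrow> R k X \<omega> = R k X' \<omega>"
proof -
  have eq': "AE \<omega> in M. \<omega> \<in> B \<longrightarrow> X' \<omega> = X \<omega>" using eq by (rule AE_mp) (auto intro!: AE_I2)
  show ?thesis using R_local_le[OF k B X X' eq] R_local_le[OF k B X' X eq']
    by eventually_elim auto
qed


lemma rho_Lp: "k \<le> K \<Longrightarrow> Lp K X \<Longrightarrow> Lp k (rho_from R k K X)"
proof (induction "K - k" arbitrary: k)
  case 0 then show ?case by (simp add: rho_from_id)
next
  case (Suc n)
  then have k: "k < K" by simp
  have st: "\<And>Z. rho_from R k K Z = R k (rho_from R (Suc k) K Z)" by (rule rho_from_step[OF k])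
  have "Lp (Suc k) (rho_from R (Suc k) K X)" using Suc by (intro Suc.hyps) auto
  then show ?case unfolding st by (rule R_Lp[OF k])
qed

lemma rho_cong: "k \<le> K \<Longrightarrow> Lp K X \<Longrightarrow> Lp K Y \<Longrightarrow> AE \<omega> in M. X \<omega> = Y \<omega> \<Longrightarrow>
   AE \<omega> in M. rho_from R k K X \<omega> = rho_from R k K Y \<omega>"
proof (induction "K - k" arbitrary: k)
  case 0 then show ?case by (simp add: rho_from_id)
next
  case (Suc n)
  then have k: "k < K" by simp
  have st: "\<And>Z. rho_from R k K Z = R k (rho_from R (Suc k) K Z)" by (rule rho_from_step[OF k])
  have "AE \<omega> in M. rho_from R (Suc k) K X \<omega> = rho_from R (Suc k) K Y \<omega>"
    using Suc by (intro Suc.hyps) auto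
  then have "AE \<omega> in M. R k (rho_from R (Suc k) K X) \<omega> = R k (rho_from R (Suc k) K Y) \<omega>"
    using k Suc.prems by (intro R_cong rho_Lp) auto
  then show ?case unfolding st .
qed

lemma rho_trans: "k \<le> K \<Longrightarrow> Lp K X \<Longrightarrow> Lp k C \<Longrightarrow>
   AE \<omega> in M. rho_from R k K (\<lambda>x. X x + C x) \<omega> = rho_from R k K X \<omega> + C \<omega>"
proof (induction "K - k" arbitrary: k)
  case 0 then show ?case by (simp add: rho_from_id)
next
  case (Suc n)
  then have k: "k < K" by simp
  have st: "\<And>Z. rho_from R k K Z = R k (rho_from R (Suc k) K Z)" by (rule rho_from_step[OF k])
  have C1: "Lp (Suc k) C" using Suc.prems Lp_upk[of k "Suc k"] by simp
  have CK: "Lp K C" using Suc.prems Lp_upk[of k K] by simp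
  have XC: "Lp K (\<lambda>x. X x + C x)" using Suc.prems CK by (intro Lp_add[OF sub]) auto
  have "AE \<omega> in M. rho_from R (Suc k) K (\<lambda>x. X x + C x) \<omega> = rho_from R (Suc k) K X \<omega> + C \<omega>"
    using Suc C1 by (intro Suc.hyps) auto
  then have 1: "AE \<omega> in M. R k (rho_from R (Suc k) K (\<lambda>x. X x + C x)) \<omega>
      = R k (\<lambda>x. rho_from R (Suc k) K X x + C x) \<omega>"
    using k Suc.prems XC C1 CK by (intro R_cong rho_Lp Lp_add[OF sub]) auto
  have 2: "AE \<omega> in M. R k (\<lambda>x. rho_from R (Suc k) K X x + C x) \<omega> = R k (rho_from R (Suc k) K X) \<omega> + C \<omega>"
    using k Suc.prems by (intro R_trans rho_Lp) auto
  show ?case unfolding st using 1 2 by eventually_elim simp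
qed

lemma rho_const: "k \<le> K \<Longrightarrow> Lp k C \<Longrightarrow> AE \<omega> in M. rho_from R k K C \<omega> = C \<omega>"
proof (induction "K - k" arbitrary: k)
  case 0 then show ?case by (simp add: rho_from_id)
next
  case (Suc n)
  then have k: "k < K" by simp
  have st: "\<And>Z. rho_from R k K Z = R k (rho_from R (Suc k) K Z)" by (rule rho_from_step[OF k])
  have C1: "Lp (Suc k) C" using Suc.prems Lp_upk[of k "Suc k"] by simp
  have CK: "Lp K C" using Suc.prems Lp_upk[of k K] by simp
  have "AE \<omega> in M. rho_from R (Suc k) K C \<omega> = C \<omega>"
    using Suc C1 by (intro Suc.hyps) auto
  then have 1: "AE \<omega> in M. R k (rho_from R (Suc k) K C) \<omega> = R k C \<omega>"
    using k CK C1 by (intro R_cong rho_Lp) auto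
  show ?case unfolding st using 1 R_const[OF k Suc.prems(2)] by eventually_elim simp
qed

lemma rho_local: "k \<le> K \<Longrightarrow> B \<in> sets (F k) \<Longrightarrow> Lp K X \<Longrightarrow> Lp K Y \<Longrightarrow>
   AE \<omega> in M. \<omega> \<in> B \<longrightarrow> X \<omega> = Y \<omega> \<Longrightarrow>
   AE \<omega> in M. \<omega> \<in> B \<longrightarrow> rho_from R k K X \<omega> = rho_from R k K Y \<omega>"
proof (induction "K - k" arbitrary: k)
  case 0 then show ?case by (simp add: rho_from_id)
next
  case (Suc n)
  then have k: "k < K" by simp
  have st: "\<And>Z. rho_from R k K Z = R k (rho_from R (Suc k) K Z)" by (rule rho_from_step[OF k])
  have B1: "B \<in> sets (F (Suc k))" using Suc.prems Fmono[of k "Suc k"] by auto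
  have "AE \<omega> in M. \<omega> \<in> B \<longrightarrow> rho_from R (Suc k) K X \<omega> = rho_from R (Suc k) K Y \<omega>"
    using Suc B1 by (intro Suc.hyps) auto
  then have "AE \<omega> in M. \<omega> \<in> B \<longrightarrow> R k (rho_from R (Suc k) K X) \<omega> = R k (rho_from R (Suc k) K Y) \<omega>"
    using k Suc.prems by (intro R_local rho_Lp) auto
  then show ?case unfolding st .
qed

lemma market:
  assumes k: "k < K" and bmr: "bounded_cond_market_risk M F S K p R"
    and \<eta>m: "\<eta> \<in> borel_measurable (F k)"
    and LD: "Lp (Suc k) (\<lambda>x. \<eta> x * (S (Suc k) x - S k x))"
  shows "AE \<omega> in M. 0 \<le> R k (\<lambda>x. - (\<eta> x * (S (Suc k) x - S k x))) \<omega>"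
proof -
  define dS where "dS = (\<lambda>l x. S (Suc l) x - S l x)"
  define D where "D = (\<lambda>x. \<eta> x * dS k x)"
  have LD': "Lp (Suc k) D" using LD by (simp add: D_def dS_def)
  have LmD: "Lp (Suc k) (\<lambda>x. - D x)" using Lp_uminus[OF sub LD'] .
  define W where "W = R k (\<lambda>x. - D x)"
  have LW: "Lp k W" unfolding W_def by (rule R_Lp[OF k LmD])
  have Wm: "W \<in> borel_measurable (F k)" using LW by (simp add: Lp_mem_def)
  define A where "A = {x \<in> space M. W x < 0}"
  have A: "A \<in> sets (F k)"
  proof -
    have "{x \<in> space (F k). W x < 0} \<in> sets (F k)" using Wm by measurable
    then show ?thesis by (simp add: A_def)
  qed
  obtain Z where ess: "is_ess_inf M (F k)
        {rho_from R k K (\<lambda>\<omega>. - (\<Sum>l\<in>{k..<K}. \<xi> l \<omega> * (S (Suc l) \<omega> - S l \<omega>))) | \<xi>.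
           admissible_pos M F S p \<xi>} Z" and zb: "AE \<omega> in M. Z \<omega> \<le> 0 \<and> - \<infinity> < Z \<omega>"
    using bmr k unfolding bounded_cond_market_risk_def by blast
  have each: "AE \<omega> in M. Z \<omega> \<le> ereal (real n * indicator A \<omega> * W \<omega>)" for n :: nat
  proof -
    define \<xi> where "\<xi> = (\<lambda>l x. if l = k then real n * indicator A x * \<eta> x else 0)"
    define \<alpha> :: "'a \<Rightarrow> real" where "\<alpha> = (\<lambda>x. real n * indicator A x)"
    have \<alpha>m: "\<alpha> \<in> borel_measurable (F k)" unfolding \<alpha>_def using A by measurable
    have \<alpha>m1: "\<alpha> \<in> borel_measurable (F (Suc k))" using meas_up[OF _ \<alpha>m] by simp
    have \<alpha>b: "\<And>x. \<bar>\<alpha> x\<bar> \<le> real n" by (simp add: \<alpha>_def indicator_def)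
    have L\<alpha>D: "Lp (Suc k) (\<lambda>x. \<alpha> x * D x)" by (rule Lp_bmul[OF sub LD' \<alpha>m1 \<alpha>b])
    have L\<alpha>mD: "Lp (Suc k) (\<lambda>x. \<alpha> x * - D x)" by (rule Lp_bmul[OF sub LmD \<alpha>m1 \<alpha>b])
    have adm: "admissible_pos M F S p \<xi>"
      unfolding admissible_pos_def
    proof
      fix l
      show "\<xi> l \<in> borel_measurable (F l) \<and> Lp (Suc l) (\<lambda>\<omega>. \<xi> l \<omega> * (S (Suc l) \<omega> - S l \<omega>))"
      proof (cases "l = k")
        case True
        have "(\<lambda>x. real n * indicator A x * \<eta> x) \<in> borel_measurable (F k)"
          using A \<eta>m by measurable
        moreover have "(\<lambda>\<omega>. \<xi> l \<omega> * (S (Suc l) \<omega> - S l \<omega>)) = (\<lambda>x. \<alpha> x * D x)"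
          using True by (auto simp: \<xi>_def \<alpha>_def D_def dS_def)
        ultimately show ?thesis using True L\<alpha>D by (simp add: \<xi>_def)
      next
        case False
        then show ?thesis using Lpc[of "Suc l" 0] by (simp add: \<xi>_def)
      qed
    qed
    define g where "g = (\<lambda>\<omega>. - (\<Sum>l\<in>{k..<K}. \<xi> l \<omega> * (S (Suc l) \<omega> - S l \<omega>)))"
    have g: "g = (\<lambda>x. \<alpha> x * - D x)"
    proof
      fix x
      have "(\<Sum>l\<in>{k..<K}. \<xi> l x * (S (Suc l) x - S l x)) = (\<Sum>l\<in>{k..<K}. if l = k then \<alpha> x * D x else 0)"
        by (rule sum.cong) (auto simp: \<xi>_def \<alpha>_def D_def dS_def)
      also have "\<dots> = \<alpha> x * D x" using k by simp
      finally show "g x = \<alpha> x * - D x" by (simp add: g_def)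
    qed
    have mem: "rho_from R k K g \<in> {rho_from R k K (\<lambda>\<omega>. - (\<Sum>l\<in>{k..<K}. \<xi> l \<omega> * (S (Suc l) \<omega> - S l \<omega>))) | \<xi>.
           admissible_pos M F S p \<xi>}" using adm unfolding g_def by blast
    have 1: "AE \<omega> in M. Z \<omega> \<le> ereal (rho_from R k K g \<omega>)"
      using ess mem unfolding is_ess_inf_def by blast
    have Lg: "Lp (Suc k) g" using L\<alpha>mD g by simp
    have LgK: "Lp K g" using Lp_upk[OF _ Lg] k by simp
    have 2: "AE \<omega> in M. R k (rho_from R (Suc k) K g) \<omega> = R k g \<omega>"
      using k Lg LgK by (intro R_cong rho_Lp rho_const) auto
    have 3: "AE \<omega> in M. R k g \<omega> = \<alpha> \<omega> * W \<omega>"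
      unfolding g W_def using k LmD \<alpha>m L\<alpha>mD by (intro R_scale) (auto simp: \<alpha>_def)
    have st: "rho_from R k K g = R k (rho_from R (Suc k) K g)" by (rule rho_from_step[OF k])
    show ?thesis using 1 2 3 unfolding st by eventually_elim (simp add: \<alpha>_def)
  qed
  then have "AE \<omega> in M. \<forall>n::nat. Z \<omega> \<le> ereal (real n * indicator A \<omega> * W \<omega>)"
    by (simp add: AE_all_countable)
  then have "AE \<omega> in M. 0 \<le> W \<omega>" using zb AE_space
  proof eventually_elim
    case (elim \<omega>)
    then have \<omega>: "\<omega> \<in> space M"
      and h: "(\<forall>n::nat. Z \<omega> \<le> ereal (real n * indicator A \<omega> * W \<omega>)) \<and> (Z \<omega> \<le> 0 \<and> - \<infinity> < Z \<omega>)"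
      by auto
    show "0 \<le> W \<omega>"
    proof (rule ccontr)
      assume "\<not> 0 \<le> W \<omega>"
      then have Wn: "W \<omega> < 0" by simp
      then have "\<omega> \<in> A" using \<omega> by (simp add: A_def)
      then have hn: "\<And>n::nat. Z \<omega> \<le> ereal (real n * W \<omega>)" using h by simp
      obtain z where z: "Z \<omega> = ereal z" using h by (cases "Z \<omega>") auto
      obtain n :: nat where n: "z / W \<omega> < real n" using reals_Archimedean2 by blast
      then have "real n * W \<omega> < z" using Wn by (simp add: divide_less_eq mult.commute)
      moreover have "z \<le> real n * W \<omega>" using hn[of n] z by simp
      ultimately show False by simp
    qed
  qed
  then show ?thesis by (simp add: W_def D_def dS_def)
qed


lemma sum_ind_real: "finite S \<Longrightarrow> (\<Sum>i\<in>S. (if t = i then 1 else 0) * f i) = (if t \<in> S then f t else (0::real))"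
proof -
  assume "finite S"
  have "(\<Sum>i\<in>S. (if t = i then 1 else 0) * f i) = (\<Sum>i\<in>S. if t = i then f i else 0)"
    by (rule sum.cong) auto
  then show ?thesis using \<open>finite S\<close> by (simp add: sum.delta)
qed

lemma main:
  fixes S :: "nat \<Rightarrow> 'a \<Rightarrow> real" and h :: "nat \<Rightarrow> 'a \<Rightarrow> real" and \<tau> :: "'a \<Rightarrow> nat"
    and \<xi>h :: "nat \<Rightarrow> nat \<Rightarrow> 'a \<Rightarrow> real"
  assumes bmr: "bounded_cond_market_risk M F S K p R"
    and hL: "\<And>i. Lp i (h i)"
    and st: "stopping_time_upto M F K \<tau>"
    and adm: "admissible_pos M F S p \<xi>" and admh: "\<And>i. admissible_pos M F S p (\<xi>h i)"
  shows "\<forall>j\<le>K. AE \<omega> in M. rho_from R j K (\<lambda>x. h (\<tau> x) x - wealth S K p0 \<xi> (\<lambda>i k x. 0) \<tau> x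
                                                  - (\<Sum>l<j. (\<Sum>i\<le>l. \<xi>h i l x * (if \<tau> x = i then 1 else 0)) * (S (Suc l) x - S l x))) \<omega>
        \<le> rho_from R j K (\<lambda>x. h (\<tau> x) x - wealth S K p0 \<xi> \<xi>h \<tau> x) \<omega>"
   and "Lp K (\<lambda>x. h (\<tau> x) x - wealth S K p0 \<xi> (\<lambda>i k x. 0) \<tau> x)"
   and "Lp K (\<lambda>x. h (\<tau> x) x - wealth S K p0 \<xi> \<xi>h \<tau> x)"
proof -
  define dS where "dS = (\<lambda>l x. S (Suc l) x - S l x)"
  define Ie :: "nat \<Rightarrow> 'a \<Rightarrow> real" where "Ie = (\<lambda>i x. if \<tau> x = i then 1 else 0)"
  define Il :: "nat \<Rightarrow> 'a \<Rightarrow> real" where "Il = (\<lambda>l x. if l < \<tau> x then 1 else 0)"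
  define \<eta> where "\<eta> = (\<lambda>l x. \<Sum>i\<le>l. \<xi>h i l x * Ie i x)"
  define X0 where "X0 = (\<lambda>x. h (\<tau> x) x - wealth S K p0 \<xi> (\<lambda>i k x. 0) \<tau> x)"
  define X' where "X' = (\<lambda>x. h (\<tau> x) x - wealth S K p0 \<xi> \<xi>h \<tau> x)"
  define Xj where "Xj = (\<lambda>j x. X0 x - (\<Sum>l<j. \<eta> l x * dS l x))"
  have tauK: "\<And>x. x \<in> space M \<Longrightarrow> \<tau> x \<le> K" using st by (simp add: stopping_time_upto_def)
  have predeq: "\<And>i. i \<le> K \<Longrightarrow> {x \<in> space M. \<tau> x = i} \<in> sets (F i)"
    using st by (simp add: stopping_time_upto_def)
  have Bset: "\<And>l. l \<le> K \<Longrightarrow> {x \<in> space M. \<tau> x \<le> l} \<in> sets (F l)"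
  proof -
    fix l assume l: "l \<le> K"
    have "{x \<in> space M. \<tau> x \<le> l} = (\<Union>i\<in>{..l}. {x \<in> space M. \<tau> x = i})" by auto
    also have "\<dots> \<in> sets (F l)"
    proof (intro sets.finite_UN)
      fix i assume "i \<in> {..l}"
      then show "{x \<in> space M. \<tau> x = i} \<in> sets (F l)" using predeq[of i] Fmono[of i l] l by auto
    qed simp
    finally show "{x \<in> space M. \<tau> x \<le> l} \<in> sets (F l)" .
  qed
  have Iem: "\<And>i k. i \<le> k \<Longrightarrow> k \<le> K \<Longrightarrow> Ie i \<in> borel_measurable (F k)"
  proof -
    fix i k assume ik: "i \<le> k" "k \<le> K"
    have "indicator {x \<in> space M. \<tau> x = i} \<in> borel_measurable (F i)"
      using predeq ik by (intro borel_measurable_indicator) auto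
    moreover have "\<And>x. x \<in> space (F i) \<Longrightarrow> indicator {x \<in> space M. \<tau> x = i} x = Ie i x"
      by (auto simp: Ie_def indicator_def)
    ultimately have "Ie i \<in> borel_measurable (F i)" by (rule measurable_cong[THEN iffD1, rotated])
    then show "Ie i \<in> borel_measurable (F k)" using meas_up ik by blast
  qed
  have Ilm: "\<And>l. l \<le> K \<Longrightarrow> Il l \<in> borel_measurable (F l)"
  proof -
    fix l assume l: "l \<le> K"
    have "(\<lambda>x. 1 - indicator {x \<in> space M. \<tau> x \<le> l} x :: real) \<in> borel_measurable (F l)"
      using Bset[OF l] by measurable
    moreover have "\<And>x. x \<in> space (F l) \<Longrightarrow> 1 - indicator {x \<in> space M. \<tau> x \<le> l} x = Il l x"
      by (auto simp: Il_def indicator_def)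
    ultimately show "Il l \<in> borel_measurable (F l)" by (rule measurable_cong[THEN iffD1, rotated])
  qed
  have Ieb: "\<And>i x. \<bar>Ie i x\<bar> \<le> 1" by (simp add: Ie_def)
  have Ilb: "\<And>i x. \<bar>Il i x\<bar> \<le> 1" by (simp add: Il_def)
  have \<xi>L: "\<And>l. Lp (Suc l) (\<lambda>x. \<xi> l x * dS l x)" using adm by (simp add: admissible_pos_def dS_def)
  have \<xi>hL: "\<And>i l. Lp (Suc l) (\<lambda>x. \<xi>h i l x * dS l x)" using admh by (simp add: admissible_pos_def dS_def)
  have \<eta>m: "\<And>l. l \<le> K \<Longrightarrow> \<eta> l \<in> borel_measurable (F l)"
  proof -
    fix l assume l: "l \<le> K"
    have "\<And>i. i \<le> l \<Longrightarrow> (\<lambda>x. \<xi>h i l x * Ie i x) \<in> borel_measurable (F l)"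
      using admh Iem l unfolding admissible_pos_def by (intro borel_measurable_times) auto
    then show "\<eta> l \<in> borel_measurable (F l)" unfolding \<eta>_def by (intro borel_measurable_sum) auto
  qed
  have \<eta>L: "\<And>l. l < K \<Longrightarrow> Lp (Suc l) (\<lambda>x. \<eta> l x * dS l x)"
  proof -
    fix l assume l: "l < K"
    have "Lp (Suc l) (\<lambda>x. \<Sum>i\<le>l. Ie i x * (\<xi>h i l x * dS l x))"
      using l by (intro Lp_sum[OF P sub] Lp_bmul[OF sub \<xi>hL Iem Ieb]) auto
    moreover have "\<And>x. (\<Sum>i\<le>l. Ie i x * (\<xi>h i l x * dS l x)) = \<eta> l x * dS l x"
      unfolding \<eta>_def sum_distrib_right by (simp add: mult_ac)
    ultimately show "Lp (Suc l) (\<lambda>x. \<eta> l x * dS l x)" by simp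
  qed
  have w0: "\<And>x. wealth S K p0 \<xi> (\<lambda>i k x. 0) \<tau> x = p0 + (\<Sum>k<K. Il k x * (\<xi> k x * dS k x))"
    by (simp add: wealth_def Il_def dS_def mult_ac)
  have w1: "\<And>x. wealth S K p0 \<xi> \<xi>h \<tau> x = wealth S K p0 \<xi> (\<lambda>i k x. 0) \<tau> x + (\<Sum>k<K. \<eta> k x * dS k x)"
    by (simp add: wealth_def \<eta>_def Ie_def dS_def distrib_right sum.distrib)
  have hsum: "\<And>x j. x \<in> space M \<Longrightarrow> \<tau> x \<le> j \<Longrightarrow> h (\<tau> x) x = (\<Sum>i\<le>j. Ie i x * h i x)"
    by (simp add: Ie_def sum_ind_real)
  have LH: "Lp K (\<lambda>x. h (\<tau> x) x)"
  proof -
    have "Lp K (\<lambda>x. \<Sum>i\<le>K. Ie i x * h i x)"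
      by (intro Lp_sum[OF P sub] Lp_upk[OF _ Lp_bmul[OF sub hL Iem Ieb]]) auto
    then show ?thesis by (rule Lp_cong[OF sub]) (metis hsum tauK)
  qed
  have LW0: "Lp K (\<lambda>x. wealth S K p0 \<xi> (\<lambda>i k x. 0) \<tau> x)"
    unfolding w0
    by (intro Lp_add[OF sub] Lpc Lp_sum[OF P sub] Lp_upk[OF _ Lp_bmul[OF sub \<xi>L meas_up[OF _ Ilm] Ilb]]) auto
  have LX0: "Lp K X0" unfolding X0_def by (intro Lp_diff[OF sub] LH LW0)
  have LXj: "\<And>j. j \<le> K \<Longrightarrow> Lp K (Xj j)"
    unfolding Xj_def by (intro Lp_diff[OF sub] LX0 Lp_sum[OF P sub] Lp_upk[OF _ \<eta>L]) auto
  have XK: "X' = Xj K" by (auto simp: X'_def Xj_def X0_def w1)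
  have LX': "Lp K X'" using LXj[of K] XK by simp
  have ind: "j \<le> K \<Longrightarrow> AE \<omega> in M. rho_from R j K (Xj j) \<omega> \<le> rho_from R j K X' \<omega>" for j
  proof (induction "K - j" arbitrary: j)
    case 0 then show ?case by (simp add: rho_from_id XK)
  next
    case (Suc n)
    then have j: "j < K" by simp
    have stp: "\<And>Z. rho_from R j K Z = R j (rho_from R (Suc j) K Z)" by (rule rho_from_step[OF j])
    have IH: "AE \<omega> in M. rho_from R (Suc j) K (Xj (Suc j)) \<omega> \<le> rho_from R (Suc j) K X' \<omega>"
      using Suc by (intro Suc.hyps) auto
    define D where "D = (\<lambda>x. \<eta> j x * dS j x)"
    define Yj where "Yj = rho_from R (Suc j) K (Xj j)"
    have LD: "Lp (Suc j) D" unfolding D_def using \<eta>L[OF j] .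
    have LYj: "Lp (Suc j) Yj" unfolding Yj_def using LXj j by (intro rho_Lp) auto
    have LYD: "Lp (Suc j) (\<lambda>x. Yj x - D x)" by (intro Lp_diff[OF sub] LYj LD)
    have LmD: "Lp (Suc j) (\<lambda>x. - D x)" by (intro Lp_uminus[OF sub] LD)
    have LmDK: "Lp K (\<lambda>x. - D x)" using Lp_upk[OF _ LmD] j by simp
    have XS: "Xj (Suc j) = (\<lambda>x. Xj j x + - D x)" by (auto simp: Xj_def D_def)
    define B where "B = {x \<in> space M. \<tau> x \<le> j}"
    have B: "B \<in> sets (F j)" unfolding B_def using Bset j by simp
    have B1: "B \<in> sets (F (Suc j))" using B Fmono[of j "Suc j"] by auto
    have Bc: "space M - B \<in> sets (F j)" using B by (metis sets.compl_sets space_F)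
    define C where "C = (\<lambda>x. (\<Sum>i\<le>j. Ie i x * h i x) - (p0 + (\<Sum>l<j. Il l x * (\<xi> l x * dS l x)))
                          - (\<Sum>l<j. \<eta> l x * dS l x))"
    have LC: "Lp j C" unfolding C_def
      by (intro Lp_diff[OF sub] Lp_add[OF sub] Lpc Lp_sum[OF P sub]
           Lp_upk[OF _ Lp_bmul[OF sub hL Iem Ieb]]
           Lp_upk[OF _ Lp_bmul[OF sub \<xi>L meas_up[OF _ Ilm] Ilb]] Lp_upk[OF _ \<eta>L]) (use j in auto)
    have LC1: "Lp (Suc j) C" using Lp_upk[OF _ LC] by simp
    have LCK: "Lp K C" using Lp_upk[OF _ LC] j by simp
    have XjC: "\<And>x. x \<in> B \<Longrightarrow> Xj j x = C x"
    proof -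
      fix x assume x: "x \<in> B"
      then have xs: "x \<in> space M" and tx: "\<tau> x \<le> j" by (auto simp: B_def)
      have "(\<Sum>k<K. Il k x * (\<xi> k x * dS k x)) = (\<Sum>k<j. Il k x * (\<xi> k x * dS k x))"
        using j tx by (intro sum.mono_neutral_right) (auto simp: Il_def)
      then show "Xj j x = C x"
        unfolding Xj_def X0_def C_def w0 using hsum[OF xs tx] by simp
    qed
    have off: "AE \<omega> in M. \<omega> \<in> space M - B \<longrightarrow> R j Yj \<omega> = R j (\<lambda>x. Yj x - D x) \<omega>"
    proof (rule R_local[OF j Bc LYj LYD], intro AE_I2 impI)
      fix x assume "x \<in> space M - B"
      then have "j < \<tau> x" by (auto simp: B_def)
      then have "\<eta> j x = 0" by (simp add: \<eta>_def Ie_def)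
      then show "Yj x = Yj x - D x" by (simp add: D_def)
    qed
    have e2: "AE \<omega> in M. \<omega> \<in> B \<longrightarrow> Yj \<omega> = rho_from R (Suc j) K C \<omega>"
      unfolding Yj_def using j LXj[of j] LCK XjC
      by (intro rho_local[OF _ B1]) (auto intro!: AE_I2)
    have e4: "AE \<omega> in M. \<omega> \<in> B \<longrightarrow> Yj \<omega> = C \<omega>"
    proof -
      have "AE \<omega> in M. rho_from R (Suc j) K C \<omega> = C \<omega>" using rho_const[OF _ LC1] j by simp
      with e2 show ?thesis by eventually_elim auto
    qed
    have e5: "AE \<omega> in M. \<omega> \<in> B \<longrightarrow> R j Yj \<omega> = R j C \<omega>"
      by (rule R_local[OF j B LYj LC1 e4])
    have e6: "AE \<omega> in M. \<omega> \<in> B \<longrightarrow> R j (\<lambda>x. Yj x - D x) \<omega> = R j (\<lambda>x. - D x + C x) \<omega>"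
      using e4 by (intro R_local[OF j B LYD Lp_add[OF sub LmD LC1]]) (auto elim!: AE_mp intro!: AE_I2)
    have e7: "AE \<omega> in M. R j (\<lambda>x. - D x + C x) \<omega> = R j (\<lambda>x. - D x) \<omega> + C \<omega>"
      by (rule R_trans[OF j LmD LC])
    have e8: "AE \<omega> in M. 0 \<le> R j (\<lambda>x. - D x) \<omega>"
      using market[OF j bmr \<eta>m[of j]] \<eta>L[OF j] j by (simp add: D_def dS_def)
    have step: "AE \<omega> in M. R j Yj \<omega> \<le> R j (\<lambda>x. Yj x - D x) \<omega>"
      using off e5 e6 e7 e8 R_const[OF j LC] AE_space
    proof eventually_elim
      case (elim \<omega>)
      then show ?case by (cases "\<omega> \<in> B") auto
    qed
    have t1: "AE \<omega> in M. rho_from R (Suc j) K (Xj (Suc j)) \<omega> = Yj \<omega> + - D \<omega>"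
      unfolding XS Yj_def using j LXj[of j] LmD by (intro rho_trans) auto
    have t2: "AE \<omega> in M. R j (rho_from R (Suc j) K (Xj (Suc j))) \<omega> = R j (\<lambda>x. Yj x - D x) \<omega>"
      using t1 j LXj[of "Suc j"] LYD by (intro R_cong rho_Lp) auto
    have t3: "AE \<omega> in M. R j (rho_from R (Suc j) K (Xj (Suc j))) \<omega> \<le> R j (rho_from R (Suc j) K X') \<omega>"
      using IH j LXj[of "Suc j"] LX' by (intro R_mono rho_Lp) auto
    show ?case unfolding stp Yj_def[symmetric] using step t2 t3 by eventually_elim simp
  qed
  show "\<forall>j\<le>K. AE \<omega> in M. rho_from R j K (\<lambda>x. h (\<tau> x) x - wealth S K p0 \<xi> (\<lambda>i k x. 0) \<tau> x
                                                  - (\<Sum>l<j. (\<Sum>i\<le>l. \<xi>h i l x * (if \<tau> x = i then 1 else 0)) * (S (Suc l) x - S l x))) \<omega>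
        \<le> rho_from R j K (\<lambda>x. h (\<tau> x) x - wealth S K p0 \<xi> \<xi>h \<tau> x) \<omega>"
    using ind unfolding Xj_def X0_def X'_def \<eta>_def Ie_def dS_def by blast
  show "Lp K (\<lambda>x. h (\<tau> x) x - wealth S K p0 \<xi> (\<lambda>i k x. 0) \<tau> x)" using LX0 by (simp add: X0_def)
  show "Lp K (\<lambda>x. h (\<tau> x) x - wealth S K p0 \<xi> \<xi>h \<tau> x)" using LX' by (simp add: X'_def)
qed

lemma main2:
  fixes S :: "nat \<Rightarrow> 'a \<Rightarrow> real" and h :: "nat \<Rightarrow> 'a \<Rightarrow> real" and \<tau> :: "'a \<Rightarrow> nat"
    and \<xi>h :: "nat \<Rightarrow> nat \<Rightarrow> 'a \<Rightarrow> real"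
  assumes bmr: "bounded_cond_market_risk M F S K p R"
    and hL: "\<And>i. Lp i (h i)"
    and st: "stopping_time_upto M F K \<tau>"
    and adm: "admissible_pos M F S p \<xi>" and admh: "\<And>i. admissible_pos M F S p (\<xi>h i)"
    and dec: "\<And>X. Lp K X \<Longrightarrow> \<rho> X = rho_from R 0 K X"
  shows "AE \<omega> in M. \<rho> (\<lambda>x. h (\<tau> x) x - wealth S K p0 \<xi> (\<lambda>i k x. 0) \<tau> x) \<omega>
              \<le> \<rho> (\<lambda>x. h (\<tau> x) x - wealth S K p0 \<xi> \<xi>h \<tau> x) \<omega>"
proof -
  note m = main[of S h \<tau> \<xi> \<xi>h p0, OF bmr hL st adm admh]
  have "AE \<omega> in M. rho_from R 0 K (\<lambda>x. h (\<tau> x) x - wealth S K p0 \<xi> (\<lambda>i k x. 0) \<tau> x) \<omega>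
        \<le> rho_from R 0 K (\<lambda>x. h (\<tau> x) x - wealth S K p0 \<xi> \<xi>h \<tau> x) \<omega>"
  proof -
    have z: "\<And>x. (\<Sum>l<0::nat. (\<Sum>i\<le>l. \<xi>h i l x * (if \<tau> x = i then 1 else 0)) * (S (Suc l) x - S l x)) = 0"
      by simp
    have "AE \<omega> in M. rho_from R 0 K (\<lambda>x. h (\<tau> x) x - wealth S K p0 \<xi> (\<lambda>i k x. 0) \<tau> x
          - (\<Sum>l<0::nat. (\<Sum>i\<le>l. \<xi>h i l x * (if \<tau> x = i then 1 else 0)) * (S (Suc l) x - S l x))) \<omega>
        \<le> rho_from R 0 K (\<lambda>x. h (\<tau> x) x - wealth S K p0 \<xi> \<xi>h \<tau> x) \<omega>"
      using m(1) by blast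
    then show ?thesis unfolding z diff_zero .
  qed
  then show ?thesis unfolding dec[OF m(2)] dec[OF m(3)] .
qed

end
theorem corollary1:
  fixes M :: "'a measure" and F :: "nat \<Rightarrow> 'a measure" and K :: nat and p :: ennreal
    and S :: "nat \<Rightarrow> 'a \<Rightarrow> real" and N :: "'y measure" and Y :: "nat \<Rightarrow> 'a \<Rightarrow> 'y"
    and Fpay :: "real \<Rightarrow> 'y \<Rightarrow> real"
    and \<rho> :: "('a \<Rightarrow> real) \<Rightarrow> ('a \<Rightarrow> real)" and R :: "nat \<Rightarrow> ('a \<Rightarrow> real) \<Rightarrow> ('a \<Rightarrow> real)"
  assumes "prob_space M"
    and "1 \<le> p"
    and "\<forall>k. subalgebra M (F k)"
    and "\<forall>k. sets (F k) \<subseteq> sets (F (Suc k))"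
    and "\<forall>k. Lp_mem M (F k) p (S k)"
    and "\<forall>k. Y k \<in> measurable (F k) N"
    and "\<forall>k. Lp_mem M (F k) p (\<lambda>\<omega>. Fpay (S k \<omega>) (Y k \<omega>))"
    and "one_step_coherent_decomposition M F p K \<rho> R"
    and "bounded_cond_market_risk M F S K p R"
  shows "\<forall>\<tau> \<xi> \<xi>h p0. stopping_time_upto M F K \<tau> \<and> admissible_pos M F S p \<xi> \<and>
            (\<forall>i. admissible_pos M F S p (\<xi>h i)) \<longrightarrow>
       (AE \<omega> in M. \<rho> (\<lambda>x. Fpay (S (\<tau> x) x) (Y (\<tau> x) x) - wealth S K p0 \<xi> (\<lambda>i k x. 0) \<tau> x) \<omega>
                 \<le> \<rho> (\<lambda>x. Fpay (S (\<tau> x) x) (Y (\<tau> x) x) - wealth S K p0 \<xi> \<xi>h \<tau> x) \<omega>) \<and>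
       (AE \<omega> in M. \<rho> (\<lambda>x. - Fpay (S (\<tau> x) x) (Y (\<tau> x) x) - wealth S K p0 \<xi> (\<lambda>i k x. 0) \<tau> x) \<omega>
                 \<le> \<rho> (\<lambda>x. - Fpay (S (\<tau> x) x) (Y (\<tau> x) x) - wealth S K p0 \<xi> \<xi>h \<tau> x) \<omega>)"
proof (intro allI impI)
  fix \<tau> \<xi> and \<xi>h :: "nat \<Rightarrow> nat \<Rightarrow> 'a \<Rightarrow> real" and p0
  assume h: "stopping_time_upto M F K \<tau> \<and> admissible_pos M F S p \<xi> \<and> (\<forall>i. admissible_pos M F S p (\<xi>h i))"
  have osd: "\<forall>k<K. coherent_cond_risk_mapping M F p k (R k)" "\<forall>X. Lp_mem M (F K) p X \<longrightarrow> \<rho> X = rho_from R 0 K X"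
    using assms(8) by (auto simp: one_step_coherent_decomposition_def)
  interpret rsetup M F p K R
  proof (rule rsetup.intro)
    show "prob_space M" by (rule assms(1))
    show "\<And>k. subalgebra M (F k)" using assms(3) by blast
    show "\<And>k. sets (F k) \<subseteq> sets (F (Suc k))" using assms(4) by blast
    show "\<And>k. k < K \<Longrightarrow> coherent_cond_risk_mapping M F p k (R k)" using osd(1) by blast
  qed
  have L1: "\<And>i. Lp i (\<lambda>\<omega>. Fpay (S i \<omega>) (Y i \<omega>))" using assms(7) by blast
  have L2: "\<And>i. Lp i (\<lambda>\<omega>. - Fpay (S i \<omega>) (Y i \<omega>))" using Lp_uminus[OF sub L1] .
  show "(AE \<omega> in M. \<rho> (\<lambda>x. Fpay (S (\<tau> x) x) (Y (\<tau> x) x) - wealth S K p0 \<xi> (\<lambda>i k x. 0) \<tau> x) \<omega>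
                 \<le> \<rho> (\<lambda>x. Fpay (S (\<tau> x) x) (Y (\<tau> x) x) - wealth S K p0 \<xi> \<xi>h \<tau> x) \<omega>) \<and>
       (AE \<omega> in M. \<rho> (\<lambda>x. - Fpay (S (\<tau> x) x) (Y (\<tau> x) x) - wealth S K p0 \<xi> (\<lambda>i k x. 0) \<tau> x) \<omega>
                 \<le> \<rho> (\<lambda>x. - Fpay (S (\<tau> x) x) (Y (\<tau> x) x) - wealth S K p0 \<xi> \<xi>h \<tau> x) \<omega>)"
  proof
    show "AE \<omega> in M. \<rho> (\<lambda>x. Fpay (S (\<tau> x) x) (Y (\<tau> x) x) - wealth S K p0 \<xi> (\<lambda>i k x. 0) \<tau> x) \<omega>
                 \<le> \<rho> (\<lambda>x. Fpay (S (\<tau> x) x) (Y (\<tau> x) x) - wealth S K p0 \<xi> \<xi>h \<tau> x) \<omega>"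
      using h osd(2) by (intro main2[OF assms(9) L1]) auto
    show "AE \<omega> in M. \<rho> (\<lambda>x. - Fpay (S (\<tau> x) x) (Y (\<tau> x) x) - wealth S K p0 \<xi> (\<lambda>i k x. 0) \<tau> x) \<omega>
                 \<le> \<rho> (\<lambda>x. - Fpay (S (\<tau> x) x) (Y (\<tau> x) x) - wealth S K p0 \<xi> \<xi>h \<tau> x) \<omega>"
      using h osd(2) by (intro main2[OF assms(9) L2]) auto
  qed
qed

end
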